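(* In the compulsory constrained two-facility location game described in the context, Mechanism 2 — which on reported profile $\mathbf{x}$ outputs a pair $(y_1,y_2)\in\arg\min_{(s_1,s_2)\in AP}\max_{j\in\{1,2\}}|s_j-\mathrm{lt}(\mathbf{x})|$, where $\mathrm{lt}(\mathbf{x})=\min_i x_i$, breaking ties in any deterministic way — is group strategyproof and has approximation ratio exactly $3$ under the maximum cost objective.
   Context: An instance consists of $n$ agents with private locations $x_1,\dots,x_n\in\mathbb{R}$, each served by both facilities $F_1,F_2$, and a finite multiset $A=\{a_1\le\dots\le a_m\}$, $m\ge2$, of real alternative locations. A deterministic mechanism maps reported locations to $(y_1,y_2)$ with $y_1\in A$, $y_2\in A\setminus\{y_1\}$ (one copy removed). $AP=\{(a_1,a_2),\dots,(a_{m-1},a_m)\}$. Agent $j$'s cost is $\max\{|y_1-x_j|,|y_2-x_j|\}$; the maximum cost is the maximum of agents' costs. Group strategyproof: for every true profile, every nonempty coalition $S$ and every joint misreport of $S$'s locations, some member of $S$ does not strictly decrease her true cost. The approximation ratio is the supremum over instances of the mechanism's maximum cost divided by the optimal maximum cost over feasible outcomes. *)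

theory Defs
  imports Complex_Main "HOL-Library.Multiset"
begin

(* The multiset A of alternatives is represented by the sorted list
   [a_1, ..., a_m]; copies are distinguished by their index. *)

definition valid_alts :: "real list \<Rightarrow> bool" where
  "valid_alts A \<longleftrightarrow> sorted A \<and> length A \<ge> 2"

definition feasible :: "real list \<Rightarrow> (real \<times> real) set" where
  "feasible A = {(y1, y2). y1 \<in># mset A \<and> y2 \<in># mset A - {#y1#}}"

definition AP :: "real list \<Rightarrow> (real \<times> real) set" where
  "AP A = {(A ! i, A ! (Suc i)) | i. Suc i < length A}"

definition agent_cost :: "real \<Rightarrow> real \<times> real \<Rightarrow> real" where
  "agent_cost xj y = max \<bar>fst y - xj\<bar> \<bar>snd y - xj\<bar>"

definition max_cost :: "nat \<Rightarrow> (nat \<Rightarrow> real) \<Rightarrow> real \<times> real \<Rightarrow> real" where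
  "max_cost n x y = Max ((\<lambda>j. agent_cost (x j) y) ` {..<n})"

definition opt_cost :: "real list \<Rightarrow> nat \<Rightarrow> (nat \<Rightarrow> real) \<Rightarrow> real" where
  "opt_cost A n x = Min (max_cost n x ` feasible A)"

definition lt :: "nat \<Rightarrow> (nat \<Rightarrow> real) \<Rightarrow> real" where
  "lt n x = Min (x ` {..<n})"

definition mech2_cands :: "real list \<Rightarrow> real \<Rightarrow> (real \<times> real) set" where
  "mech2_cands A l = {p \<in> AP A. \<forall>q \<in> AP A. agent_cost l p \<le> agent_cost l q}"

(* Deterministic tie-breaking: a fixed priority over the pairs of AP,
   given by a ranking r that is injective on AP A (smaller rank wins). *)
definition tiebreak_ok :: "real list \<Rightarrow> (real \<times> real \<Rightarrow> nat) \<Rightarrow> bool" where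
  "tiebreak_ok A r \<longleftrightarrow> inj_on r (AP A)"

definition mech2 :: "real list \<Rightarrow> (real \<times> real \<Rightarrow> nat) \<Rightarrow> nat \<Rightarrow> (nat \<Rightarrow> real) \<Rightarrow> real \<times> real" where
  "mech2 A r n x = (THE p. p \<in> mech2_cands A (lt n x) \<and>
                       (\<forall>q \<in> mech2_cands A (lt n x). r p \<le> r q))"

definition group_strategyproof :: "nat \<Rightarrow> ((nat \<Rightarrow> real) \<Rightarrow> real \<times> real) \<Rightarrow> bool" where
  "group_strategyproof n M \<longleftrightarrow>
     (\<forall>x x' S. S \<noteq> {} \<and> S \<subseteq> {..<n} \<and> (\<forall>i \<in> {..<n} - S. x' i = x i) \<longrightarrow>
        (\<exists>j \<in> S. agent_cost (x j) (M x') \<ge> agent_cost (x j) (M x)))"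

definition approx_ratio :: "(real list \<Rightarrow> real \<times> real \<Rightarrow> nat) \<Rightarrow> real" where
  "approx_ratio R = Sup {max_cost n x (mech2 A (R A) n x) / opt_cost A n x | A n x.
       valid_alts A \<and> n \<ge> 1 \<and> opt_cost A n x > 0}"

end

theory Submission
  imports Defs
begin

lemma AP_eq: "AP A = (\<lambda>i. (A ! i, A ! Suc i)) ` {i. Suc i < length A}"
  unfolding AP_def by auto

lemma AP_finite: "finite (AP A)"
proof -
  have "finite {i. Suc i < length A}" by (rule finite_subset[of _ "{..<length A}"]) auto
  then show ?thesis unfolding AP_eq by auto
qed

lemma AP_ne: "valid_alts A \<Longrightarrow> AP A \<noteq> {}"
  unfolding AP_eq valid_alts_def by (auto intro!: exI[of _ 0])

lemma AP_sorted: "valid_alts A \<Longrightarrow> p \<in> AP A \<Longrightarrow> fst p \<le> snd p"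
  unfolding AP_def valid_alts_def by (auto simp: sorted_iff_nth_mono)

lemma cands_ne:
  assumes "valid_alts A" shows "mech2_cands A l \<noteq> {}"
proof -
  let ?m = "Min ((\<lambda>p. agent_cost l p) ` AP A)"
  have "?m \<in> (\<lambda>p. agent_cost l p) ` AP A"
    using AP_finite AP_ne[OF assms] by (intro Min_in) auto
  then obtain p where p: "p \<in> AP A" "agent_cost l p = ?m" by auto
  have "\<forall>q\<in>AP A. agent_cost l p \<le> agent_cost l q"
    using p AP_finite by auto
  then have "p \<in> mech2_cands A l" using p unfolding mech2_cands_def by auto
  then show ?thesis by blast
qed

lemma mech2_prop:
  assumes "valid_alts A" "inj_on r (AP A)"
  shows "mech2 A r n x \<in> mech2_cands A (lt n x) \<and>
    (\<forall>q\<in>mech2_cands A (lt n x). r (mech2 A r n x) \<le> r q)"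
proof -
  let ?C = "mech2_cands A (lt n x)"
  have fin: "finite ?C" using AP_finite[of A] unfolding mech2_cands_def by auto
  have ne: "?C \<noteq> {}" using cands_ne[OF assms(1)] .
  have "Min (r ` ?C) \<in> r ` ?C" using fin ne by (intro Min_in) auto
  then obtain p where p: "p \<in> ?C" "r p = Min (r ` ?C)" by auto
  have P: "p \<in> ?C \<and> (\<forall>q\<in>?C. r p \<le> r q)" using p fin by auto
  have U: "p' = p" if "p' \<in> ?C \<and> (\<forall>q\<in>?C. r p' \<le> r q)" for p'
  proof -
    have "r p' \<le> r p" using that P by blast
    moreover have "r p \<le> r p'" using that P by blast
    ultimately have "r p' = r p" by simp
    moreover have "p \<in> AP A" "p' \<in> AP A" using that P unfolding mech2_cands_def by auto
    ultimately show ?thesis using assms(2) by (meson inj_onD)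
  qed
  have "mech2 A r n x = p"
    unfolding mech2_def using P U by (intro the_equality) blast+
  then show ?thesis using P by simp
qed

lemma lt_prop:
  assumes "n \<ge> 1"
  shows "\<exists>j<n. x j = lt n x" "\<And>j. j < n \<Longrightarrow> lt n x \<le> x j"
proof -
  have "lt n x \<in> x ` {..<n}" unfolding lt_def using assms by (intro Min_in) (auto simp: lessThan_empty_iff)
  then show "\<exists>j<n. x j = lt n x" by auto
  show "\<And>j. j < n \<Longrightarrow> lt n x \<le> x j" unfolding lt_def by auto
qed

lemma key_ineq:
  fixes p1 p2 q1 q2 l l' t :: real
  assumes "p1 \<le> p2" "q1 \<le> q2" "l' < l" "l \<le> t"
    "max \<bar>p1 - l\<bar> \<bar>p2 - l\<bar> \<le> max \<bar>q1 - l\<bar> \<bar>q2 - l\<bar>"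
    "max \<bar>q1 - l'\<bar> \<bar>q2 - l'\<bar> \<le> max \<bar>p1 - l'\<bar> \<bar>p2 - l'\<bar>"
    "max \<bar>q1 - t\<bar> \<bar>q2 - t\<bar> < max \<bar>p1 - t\<bar> \<bar>p2 - t\<bar>"
  shows "max \<bar>p1 - l\<bar> \<bar>p2 - l\<bar> = max \<bar>q1 - l\<bar> \<bar>q2 - l\<bar> \<and>
    max \<bar>q1 - l'\<bar> \<bar>q2 - l'\<bar> = max \<bar>p1 - l'\<bar> \<bar>p2 - l'\<bar>"
  using assms by (smt (verit))

lemma mech2_dep: "lt n x' = lt n x \<Longrightarrow> mech2 A r n x' = mech2 A r n x"
  unfolding mech2_def by simp

lemma gsp:
  assumes A: "valid_alts A" and inj: "inj_on r (AP A)" and n: "n \<ge> 1"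
  shows "group_strategyproof n (mech2 A r n)"
  unfolding group_strategyproof_def
proof (intro allI impI)
  fix x x' :: "nat \<Rightarrow> real" and S
  assume H: "S \<noteq> {} \<and> S \<subseteq> {..<n} \<and> (\<forall>i\<in>{..<n} - S. x' i = x i)"
  define l where "l = lt n x"
  define l' where "l' = lt n x'"
  define p where "p = mech2 A r n x"
  define q where "q = mech2 A r n x'"
  have pP: "p \<in> mech2_cands A l \<and> (\<forall>w\<in>mech2_cands A l. r p \<le> r w)"
    unfolding p_def l_def using mech2_prop[OF A inj] by blast
  have qP: "q \<in> mech2_cands A l' \<and> (\<forall>w\<in>mech2_cands A l'. r q \<le> r w)"
    unfolding q_def l'_def using mech2_prop[OF A inj] by blast
  have pAP: "p \<in> AP A" and qAP: "q \<in> AP A" using pP qP unfolding mech2_cands_def by auto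
  consider "l' = l" | "l < l'" | "l' < l" by linarith
  then show "\<exists>j\<in>S. agent_cost (x j) (mech2 A r n x) \<le> agent_cost (x j) (mech2 A r n x')"
  proof cases
    case 1
    then have "mech2 A r n x' = mech2 A r n x" using mech2_dep l_def l'_def by metis
    then show ?thesis using H by auto
  next
    case 2
    obtain j0 where j0: "j0 < n" "x j0 = l" using lt_prop(1)[OF n, of x] l_def by auto
    have "j0 \<in> S"
    proof (rule ccontr)
      assume "j0 \<notin> S"
      then have "x' j0 = x j0" using H j0 by auto
      moreover have "l' \<le> x' j0" using lt_prop(2)[OF n j0(1)] l'_def by auto
      ultimately show False using 2 j0 by auto
    qed
    moreover have "agent_cost (x j0) p \<le> agent_cost (x j0) q"
      using pP qAP j0 unfolding mech2_cands_def by auto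
    ultimately show ?thesis unfolding p_def q_def by auto
  next
    case 3
    obtain j1 where j1: "j1 < n" "x' j1 = l'" using lt_prop(1)[OF n, of x'] l'_def by auto
    have "j1 \<in> S"
    proof (rule ccontr)
      assume "j1 \<notin> S"
      then have "x' j1 = x j1" using H j1 by auto
      moreover have "l \<le> x j1" using lt_prop(2)[OF n j1(1)] l_def by auto
      ultimately show False using 3 j1 by auto
    qed
    moreover have "agent_cost (x j1) p \<le> agent_cost (x j1) q"
    proof (rule ccontr)
      assume C: "\<not> ?thesis"
      have lt1: "l \<le> x j1" using lt_prop(2)[OF n j1(1)] l_def by auto
      have c1: "agent_cost l p \<le> agent_cost l q" using pP qAP unfolding mech2_cands_def by auto
      have c2: "agent_cost l' q \<le> agent_cost l' p" using qP pAP unfolding mech2_cands_def by auto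
      have C': "agent_cost (x j1) q < agent_cost (x j1) p" using C by simp
      have E: "agent_cost l p = agent_cost l q \<and> agent_cost l' q = agent_cost l' p"
        unfolding agent_cost_def
        by (rule key_ineq[OF AP_sorted[OF A pAP] AP_sorted[OF A qAP] 3 lt1
              c1[unfolded agent_cost_def] c2[unfolded agent_cost_def] C'[unfolded agent_cost_def]])
      have "q \<in> mech2_cands A l" using E pP qAP unfolding mech2_cands_def by auto
      then have r1: "r p \<le> r q" using pP by auto
      have "p \<in> mech2_cands A l'" using E qP pAP unfolding mech2_cands_def by auto
      then have r2: "r q \<le> r p" using qP by auto
      have "p = q" using r1 r2 inj pAP qAP by (meson antisym inj_onD)
      then show False using C by simp
    qed
    ultimately show ?thesis unfolding p_def q_def by auto
  qed
qed

lemma feas_idx: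
  "y1 \<in># mset A \<Longrightarrow> y2 \<in># mset A - {#y1#} \<Longrightarrow>
   \<exists>i k. i < length A \<and> k < length A \<and> i \<noteq> k \<and> A ! i = y1 \<and> A ! k = y2"
proof (induction A)
  case Nil
  then show ?case by simp
next
  case (Cons a A)
  show ?case
  proof (cases "y1 = a")
    case True
    then have "y2 \<in> set A" using Cons.prems by simp
    then obtain k where "k < length A" "A ! k = y2" by (metis in_set_conv_nth)
    then show ?thesis using True by (intro exI[of _ 0] exI[of _ "Suc k"]) auto
  next
    case False
    then have y1A: "y1 \<in># mset A" using Cons.prems by simp
    show ?thesis
    proof (cases "y2 = a")
      case True
      obtain i where "i < length A" "A ! i = y1" using y1A by (metis in_set_conv_nth set_mset_mset)
      then show ?thesis using True by (intro exI[of _ "Suc i"] exI[of _ 0]) auto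
    next
      case F2: False
      have "mset (a # A) - {#y1#} = add_mset a (mset A - {#y1#})"
        by (subst diff_union_swap[OF False]) simp
      then have "y2 \<in># mset A - {#y1#}" using Cons.prems F2 by simp
      then obtain i k where "i < length A" "k < length A" "i \<noteq> k" "A ! i = y1" "A ! k = y2"
        using Cons.IH y1A by blast
      then show ?thesis by (intro exI[of _ "Suc i"] exI[of _ "Suc k"]) auto
    qed
  qed
qed

lemma feas_finite: "finite (feasible A)"
proof -
  have "feasible A \<subseteq> set A \<times> set A"
    unfolding feasible_def by (auto dest: in_diffD)
  then show ?thesis by (rule finite_subset) auto
qed

lemma feas_ne: assumes "valid_alts A" shows "feasible A \<noteq> {}"
proof -
  obtain a b rest where "A = a # b # rest" using assms unfolding valid_alts_def
    by (metis Suc_le_length_iff numeral_2_eq_2)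
  then have "(a, b) \<in> feasible A" unfolding feasible_def by simp
  then show ?thesis by auto
qed

lemma max_cost_ge: "j < n \<Longrightarrow> agent_cost (x j) y \<le> max_cost n x y"
  unfolding max_cost_def by (intro Max_ge) auto

lemma max_cost_le: "n \<ge> 1 \<Longrightarrow> (\<And>j. j < n \<Longrightarrow> agent_cost (x j) y \<le> c) \<Longrightarrow> max_cost n x y \<le> c"
  unfolding max_cost_def by (subst Max_le_iff) (auto simp: lessThan_empty_iff)

lemma arith1:
  fixes a b c l :: real
  assumes "a \<le> b" "b \<le> c"
  shows "max \<bar>a - l\<bar> \<bar>b - l\<bar> \<le> max \<bar>a - l\<bar> \<bar>c - l\<bar>"
  using assms by (smt (verit))

lemma ub:
  assumes A: "valid_alts A" and inj: "inj_on r (AP A)" and n: "n \<ge> 1"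
  shows "max_cost n x (mech2 A r n x) \<le> 3 * opt_cost A n x"
proof -
  define OPT where "OPT = opt_cost A n x"
  have "OPT \<in> max_cost n x ` feasible A"
    unfolding OPT_def opt_cost_def using feas_finite feas_ne[OF A] by (intro Min_in) auto
  then obtain o1 o2 where o: "(o1, o2) \<in> feasible A" "OPT = max_cost n x (o1, o2)" by auto
  obtain i k where ik: "i < length A" "k < length A" "i \<noteq> k" "A ! i = o1" "A ! k = o2"
  proof -
    have h1: "o1 \<in># mset A" and h2: "o2 \<in># mset A - {#o1#}" using o(1) unfolding feasible_def by auto
    show ?thesis using feas_idx[OF h1 h2] that by blast
  qed
  obtain i' k' where ik': "i' < k'" "k' < length A"
    "\<And>s. agent_cost s (A ! i', A ! k') = agent_cost s (o1, o2)"
  proof (cases "i < k")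
    case True
    then show ?thesis using that[of i k] ik by auto
  next
    case False
    then have "k < i" using ik by auto
    then show ?thesis using that[of k i] ik unfolding agent_cost_def by (auto simp: max.commute)
  qed
  have so: "sorted A" using A unfolding valid_alts_def by auto
  have m1: "A ! i' \<le> A ! Suc i'" "A ! Suc i' \<le> A ! k'"
    using ik' so by (auto simp: sorted_iff_nth_mono)
  have wAP: "(A ! i', A ! Suc i') \<in> AP A" unfolding AP_def using ik' by auto
  define l where "l = lt n x"
  obtain j0 where j0: "j0 < n" "x j0 = l" using lt_prop(1)[OF n, of x] l_def by auto
  define p where "p = mech2 A r n x"
  have pP: "p \<in> mech2_cands A l"
    unfolding p_def l_def using mech2_prop[OF A inj] by blast
  have "agent_cost l p \<le> agent_cost l (A ! i', A ! Suc i')"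
    using pP wAP unfolding mech2_cands_def by auto
  also have "\<dots> \<le> agent_cost l (A ! i', A ! k')"
    unfolding agent_cost_def using arith1[OF m1] by simp
  also have "\<dots> = agent_cost (x j0) (o1, o2)" using ik'(3) j0 by simp
  also have "\<dots> \<le> OPT" using o(2) max_cost_ge[OF j0(1)] by simp
  finally have pl: "agent_cost l p \<le> OPT" .
  have "agent_cost (x j) p \<le> 3 * OPT" if j: "j < n" for j
  proof -
    have "agent_cost (x j) (o1, o2) \<le> OPT" using o(2) max_cost_ge[OF j] by simp
    moreover have "agent_cost l (o1, o2) \<le> OPT" using o(2) max_cost_ge[OF j0(1), of x "(o1, o2)"] j0 by simp
    moreover have "l \<le> x j" using lt_prop(2)[OF n j] l_def by simp
    ultimately show ?thesis using pl unfolding agent_cost_def by (smt (verit))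
  qed
  then show ?thesis using max_cost_le[OF n] unfolding p_def OPT_def by blast
qed

lemma lb:
  fixes e :: real
  assumes e: "0 < e" and inj: "inj_on r (AP [-1, -1, 1 + e, 1 + e])"
  shows "3 / (1 + e) \<le> max_cost 2 (\<lambda>j. if j = 0 then 0 else 2) (mech2 [-1, -1, 1 + e, 1 + e] r 2 (\<lambda>j. if j = 0 then 0 else 2))
      / opt_cost [-1, -1, 1 + e, 1 + e] 2 (\<lambda>j. if j = 0 then 0 else 2)"
    and "opt_cost [-1, -1, 1 + e, 1 + e] 2 (\<lambda>j. if j = 0 then 0 else 2) > 0"
    and "valid_alts [-1, -1, 1 + e, 1 + e]"
proof -
  define A :: "real list" where "A = [-1, -1, 1 + e, 1 + e]"
  define x :: "nat \<Rightarrow> real" where "x = (\<lambda>j. if j = 0 then 0 else 2)"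
  show vA: "valid_alts [-1, -1, 1 + e, 1 + e]" unfolding valid_alts_def using e by simp
  have lt0: "lt 2 x = 0" unfolding lt_def x_def by (simp add: numeral_2_eq_2 lessThan_Suc)
  have I: "{i. Suc i < length A} = {0, 1, 2}" unfolding A_def by auto
  have APe: "AP A = {(-1, -1), (-1, 1 + e), (1 + e, 1 + e)}"
    unfolding AP_eq I by (simp add: A_def numeral_2_eq_2)
  have "mech2 A r 2 x \<in> mech2_cands A 0"
    using mech2_prop[OF vA[folded A_def] inj[folded A_def]] lt0 by metis
  then have mp: "mech2 A r 2 x = (-1, -1)"
    unfolding mech2_cands_def APe agent_cost_def using e by auto
  have mc: "max_cost 2 x (mech2 A r 2 x) = 3"
    unfolding mp
  proof (rule antisym)
    show "max_cost 2 x (-1, -1) \<le> 3"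
      by (rule max_cost_le) (auto simp: agent_cost_def x_def)
    have "agent_cost (x 1) (-1, -1) \<le> max_cost 2 x (-1, -1)" by (rule max_cost_ge) simp
    then show "3 \<le> max_cost 2 x (-1, -1)" by (simp add: agent_cost_def x_def)
  qed
  have fe: "(1 + e, 1 + e) \<in> feasible A" unfolding feasible_def A_def by simp
  have "opt_cost A 2 x \<le> max_cost 2 x (1 + e, 1 + e)"
    unfolding opt_cost_def using fe feas_finite by (intro Min_le) auto
  also have "\<dots> \<le> 1 + e"
    by (rule max_cost_le) (use e in \<open>auto simp: agent_cost_def x_def\<close>)
  finally have ou: "opt_cost A 2 x \<le> 1 + e" .
  have "opt_cost A 2 x \<in> max_cost 2 x ` feasible A"
    unfolding opt_cost_def using feas_finite feas_ne[OF vA[folded A_def]] by (intro Min_in) auto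
  then obtain y1 y2 where y: "opt_cost A 2 x = max_cost 2 x (y1, y2)" by auto
  have "agent_cost (x 0) (y1, y2) \<le> max_cost 2 x (y1, y2)" by (rule max_cost_ge) simp
  moreover have "agent_cost (x 1) (y1, y2) \<le> max_cost 2 x (y1, y2)" by (rule max_cost_ge) simp
  ultimately have "1 \<le> max_cost 2 x (y1, y2)" unfolding agent_cost_def x_def by (simp add: abs_le_iff)
  then have o1: "1 \<le> opt_cost A 2 x" using y by simp
  show "opt_cost [-1, -1, 1 + e, 1 + e] 2 (\<lambda>j. if j = 0 then 0 else 2) > 0"
    using o1 unfolding A_def x_def by simp
  have "3 / (1 + e) \<le> 3 / opt_cost A 2 x" using o1 ou by (intro divide_left_mono) auto
  then show "3 / (1 + e) \<le> max_cost 2 (\<lambda>j. if j = 0 then 0 else 2) (mech2 [-1, -1, 1 + e, 1 + e] r 2 (\<lambda>j. if j = 0 then 0 else 2))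
      / opt_cost [-1, -1, 1 + e, 1 + e] 2 (\<lambda>j. if j = 0 then 0 else 2)"
    using mc unfolding A_def x_def by simp
qed

theorem theorem4:
  fixes R :: "real list \<Rightarrow> real \<times> real \<Rightarrow> nat"
  assumes "\<And>A. tiebreak_ok A (R A)"
  shows "(\<forall>A n. valid_alts A \<and> n \<ge> 1 \<longrightarrow> group_strategyproof n (mech2 A (R A) n))
         \<and> approx_ratio R = 3"
proof
  have inj: "\<And>A. inj_on (R A) (AP A)" using assms unfolding tiebreak_ok_def by auto
  show "\<forall>A n. valid_alts A \<and> n \<ge> 1 \<longrightarrow> group_strategyproof n (mech2 A (R A) n)"
    using gsp inj by blast
  let ?X = "{max_cost n x (mech2 A (R A) n x) / opt_cost A n x | A n x.
       valid_alts A \<and> n \<ge> 1 \<and> opt_cost A n x > 0}"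
  have mem: "\<exists>v\<in>?X. 3 / (1 + e) \<le> v" if e: "e > 0" for e :: real
  proof -
    let ?A = "[-1, -1, 1 + e, 1 + e] :: real list"
    let ?x = "(\<lambda>j. if j = 0 then 0 else 2) :: nat \<Rightarrow> real"
    note L = lb[OF e inj[of ?A]]
    have "max_cost 2 ?x (mech2 ?A (R ?A) 2 ?x) / opt_cost ?A 2 ?x \<in> ?X"
      apply (rule CollectI)
      apply (rule exI[of _ ?A], rule exI[of _ "2::nat"], rule exI[of _ ?x])
      using L(2,3) by simp
    then show ?thesis using L(1) by blast
  qed
  show "approx_ratio R = 3"
    unfolding approx_ratio_def
  proof (rule cSup_eq_non_empty)
    show "?X \<noteq> {}" using mem[of 1] by auto
    show "v \<le> 3" if vX: "v \<in> ?X" for v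
    proof -
      obtain A n x where v: "v = max_cost n x (mech2 A (R A) n x) / opt_cost A n x"
        "valid_alts A" "n \<ge> 1" "opt_cost A n x > 0" using vX by blast
      show ?thesis using ub[OF v(2) inj v(3), of x] v(1,4) by (simp add: divide_le_eq)
    qed
    show "3 \<le> y" if ub: "\<And>v. v \<in> ?X \<Longrightarrow> v \<le> y" for y
    proof (rule ccontr)
      assume "\<not> 3 \<le> y"
      then have y3: "y < 3" by simp
      obtain v1 where v1: "v1 \<in> ?X" "3 / (1 + 1) \<le> v1" using mem[of 1] by auto
      have "3 / 2 \<le> y" using ub[OF v1(1)] v1(2) by simp
      then have y0: "y > 0" by simp
      define e where "e = (3 - y) / 6"
      have e0: "e > 0" using y3 e_def by simp
      obtain v2 where v2: "v2 \<in> ?X" "3 / (1 + e) \<le> v2" using mem[OF e0] by auto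
      have "3 / (1 + e) \<le> y" using ub[OF v2(1)] v2(2) by simp
      then have "3 \<le> y * (1 + e)" using e0 by (simp add: divide_le_eq)
      moreover have "y * (1 + e) = y + y * (3 - y) / 6" unfolding e_def by (simp add: algebra_simps)
      moreover have "y * (3 - y) \<le> 3 * (3 - y)" using y3 y0 by (intro mult_right_mono) auto
      then have "y * (3 - y) / 6 \<le> 3 * (3 - y) / 6" by (intro divide_right_mono) auto
      ultimately have "3 \<le> y + 3 * (3 - y) / 6" by linarith
      then have "18 \<le> 6 * y + 3 * (3 - y)" by (simp add: field_simps)
      then show False using y3 by (simp add: algebra_simps)
    qed
  qed
qed

end
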